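(* Let $R$ be a commutative unital ring which is Noetherian and quasi-Euclidean, and let $M$ be a finitely generated $R$-module whose minimal number of generators is $\mathrm{rk}_R(M)$. Then for every integer $n > \mathrm{rk}_R(M)$, the action of $\mathrm{E}_n(R)$ on $\mathrm{Um}_n(M)$ by matrix right-multiplication is transitive.
   Context: A ring $R$ is quasi-Euclidean if for every $n \ge 2$ and every $\mathbf{r} = (r_1,\dots,r_n) \in R^n$ there exist $E \in \mathrm{E}_n(R)$ and $d \in R$ with $(d,0,\dots,0) = \mathbf{r}E$. $\mathrm{E}_n(R)$ is the subgroup of $\mathrm{GL}_n(R)$ generated by the elementary matrices (matrices differing from the identity in a single off-diagonal entry). $\mathrm{Um}_n(M)$ is the set of $\mathbf{m}=(m_1,\dots,m_n)\in M^n$ whose components generate $M$, and a matrix $A$ acts by $(\mathbf{m}A)_j = \sum_i m_i A_{ij}$. *)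

theory Defs
  imports Complex_Main
begin

(* Square n x n matrices over R are represented as functions nat => nat => 'r,
   only the entries with indices < n being relevant; vectors as functions nat => _,
   only the components with index < n being relevant. *)

definition mat_mult :: "nat \<Rightarrow> (nat \<Rightarrow> nat \<Rightarrow> 'r::comm_ring_1) \<Rightarrow> (nat \<Rightarrow> nat \<Rightarrow> 'r) \<Rightarrow> (nat \<Rightarrow> nat \<Rightarrow> 'r)" where
  "mat_mult n A B = (\<lambda>i k. \<Sum>j<n. A i j * B j k)"

definition id_mat :: "nat \<Rightarrow> nat \<Rightarrow> 'r::comm_ring_1" where
  "id_mat = (\<lambda>i j. if i = j then 1 else 0)"

definition elem_mat :: "nat \<Rightarrow> nat \<Rightarrow> 'r::comm_ring_1 \<Rightarrow> nat \<Rightarrow> nat \<Rightarrow> 'r" where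
  "elem_mat p q a = (\<lambda>i j. if i = p \<and> j = q then a else id_mat i j)"

(* E_n(R): the subgroup of GL_n(R) generated by the elementary matrices.  Since the inverse
   of an elementary matrix elem_mat p q a is elem_mat p q (-a), the submonoid generated by
   the elementary matrices is already this subgroup. *)
inductive_set E_group :: "nat \<Rightarrow> (nat \<Rightarrow> nat \<Rightarrow> 'r::comm_ring_1) set" for n :: nat where
  E_id: "id_mat \<in> E_group n"
| E_step: "A \<in> E_group n \<Longrightarrow> p < n \<Longrightarrow> q < n \<Longrightarrow> p \<noteq> q
            \<Longrightarrow> mat_mult n A (elem_mat p q a) \<in> E_group n"

definition vec_mat_mult :: "nat \<Rightarrow> (nat \<Rightarrow> 'r::comm_ring_1) \<Rightarrow> (nat \<Rightarrow> nat \<Rightarrow> 'r) \<Rightarrow> nat \<Rightarrow> 'r" where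
  "vec_mat_mult n r A = (\<lambda>j. \<Sum>i<n. r i * A i j)"

definition quasi_euclidean :: "'r::comm_ring_1 itself \<Rightarrow> bool" where
  "quasi_euclidean _ \<longleftrightarrow>
     (\<forall>n \<ge> 2. \<forall>r :: nat \<Rightarrow> 'r. \<exists>E \<in> E_group n. \<exists>d.
        \<forall>j<n. vec_mat_mult n r E j = (if j = 0 then d else 0))"

definition noetherian_ring :: "'r::comm_ring_1 itself \<Rightarrow> bool" where
  "noetherian_ring _ \<longleftrightarrow>
     (\<forall>I :: 'r set. module.subspace ((*) :: 'r \<Rightarrow> 'r \<Rightarrow> 'r) I \<longrightarrow>
        (\<exists>S. finite S \<and> module.span ((*) :: 'r \<Rightarrow> 'r \<Rightarrow> 'r) S = I))"

definition fin_gen_module :: "('r::comm_ring_1 \<Rightarrow> 'm::ab_group_add \<Rightarrow> 'm) \<Rightarrow> bool" where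
  "fin_gen_module scale \<longleftrightarrow> (\<exists>S. finite S \<and> module.span scale S = UNIV)"

definition module_rank :: "('r::comm_ring_1 \<Rightarrow> 'm::ab_group_add \<Rightarrow> 'm) \<Rightarrow> nat" where
  "module_rank scale = (LEAST k. \<exists>S. finite S \<and> card S = k \<and> module.span scale S = UNIV)"

definition Um :: "('r::comm_ring_1 \<Rightarrow> 'm::ab_group_add \<Rightarrow> 'm) \<Rightarrow> nat \<Rightarrow> (nat \<Rightarrow> 'm) set" where
  "Um scale n = {m. module.span scale (m ` {..<n}) = UNIV}"

definition mod_vec_mat :: "('r::comm_ring_1 \<Rightarrow> 'm::ab_group_add \<Rightarrow> 'm) \<Rightarrow> nat \<Rightarrow> (nat \<Rightarrow> 'm) \<Rightarrow> (nat \<Rightarrow> nat \<Rightarrow> 'r) \<Rightarrow> nat \<Rightarrow> 'm" where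
  "mod_vec_mat scale n m A = (\<lambda>j. \<Sum>i<n. scale (A i j) (m i))"

end

theory Submission imports Defs begin

lemma mat_mult_elem_entry:
  assumes "j < n" "p < n" "p \<noteq> q"
  shows "mat_mult n A (elem_mat p q a) i j = A i j + (if j = q then A i p * a else 0)"
proof -
  have "mat_mult n A (elem_mat p q a) i j = (\<Sum>l<n. (if l = p \<and> j = q then A i p * a else 0) + (if l = j then A i j else 0))"
    unfolding mat_mult_def elem_mat_def id_mat_def
    by (rule sum.cong) (use assms in auto)
  also have "\<dots> = A i j + (if j = q then A i p * a else 0)"
    using assms by (simp add: sum.distrib)
  finally show ?thesis .
qed

inductive est :: "('a \<Rightarrow> 'b \<Rightarrow> 'b) \<Rightarrow> nat \<Rightarrow> (nat \<Rightarrow> 'b::ab_group_add) \<Rightarrow> (nat \<Rightarrow> 'b) \<Rightarrow> bool" for sc n where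
  st_base: "(\<forall>j<n. x j = y j) \<Longrightarrow> est sc n x y"
| st_step: "est sc n x y \<Longrightarrow> p < n \<Longrightarrow> q < n \<Longrightarrow> p \<noteq> q \<Longrightarrow>
     (\<forall>j<n. z j = (if j = q then y q + sc a (y p) else y j)) \<Longrightarrow> est sc n x z"

context module begin


lemma mod_vec_elem:
  assumes "j < n" "p < n" "p \<noteq> q"
  shows "mod_vec_mat scale n u (mat_mult n A (elem_mat p q a)) j =
     (if j = q then mod_vec_mat scale n u A q + a *s mod_vec_mat scale n u A p else mod_vec_mat scale n u A j)"
  using assms
  by (auto simp: mod_vec_mat_def mat_mult_elem_entry scale_left_distrib sum.distrib scale_sum_right mult.commute)

lemma mod_vec_id: "j < n \<Longrightarrow> mod_vec_mat scale n u id_mat j = u j"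
proof -
  assume j: "j < n"
  have "mod_vec_mat scale n u id_mat j = (\<Sum>i<n. if i = j then u i else 0)"
    unfolding mod_vec_mat_def id_mat_def by (rule sum.cong) auto
  then show ?thesis using j by simp
qed

lemma st_eqn: assumes "est scale n x1 y1" "\<forall>j<n. y1 j = z1 j" shows "est scale n x1 z1"
  using assms(1)
proof (cases rule: est.cases)
  case st_base
  then show ?thesis using assms(2) by (intro est.st_base) auto
next
  case (st_step y p q a)
  then show ?thesis using assms(2) by (intro est.st_step[of scale n x1 y p q z1 a]) auto
qed

lemma st_trans: "est scale n y z \<Longrightarrow> est scale n x y \<Longrightarrow> est scale n x z"
proof (induction rule: est.induct)
  case (st_base y z)
  then show ?case using st_eqn by blast
next
  case (st_step y z' p q z a)
  then show ?case by (intro est.st_step[of scale n x z' p q z a]) auto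
qed

lemma st_refl: "est scale n x x"
  by (rule st_base) auto

lemma st_sym: "est scale n x y \<Longrightarrow> est scale n y x"
proof (induction rule: est.induct)
  case (st_base x y)
  then show ?case by (intro est.st_base) auto
next
  case (st_step x y p q z a)
  have "est scale n z y"
    by (rule est.st_step[of scale n z z p q y "-a", OF st_refl]) (use st_step in auto)
  then show ?case using st_step st_trans by blast
qed

lemma st_span: "est scale n x y \<Longrightarrow> j < n \<Longrightarrow> y j \<in> span (x ` {..<n})"
proof (induction arbitrary: j rule: est.induct)
  case (st_base x y)
  then show ?case by (metis imageI lessThan_iff span_base)
next
  case (st_step x y p q z a)
  then show ?case by (auto intro!: span_add span_scale)
qed

lemma st_reach: "est scale n x y \<Longrightarrow> \<exists>E\<in>E_group n. \<forall>j<n. mod_vec_mat scale n x E j = y j"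
proof (induction rule: est.induct)
  case (st_base x y)
  then show ?case by (intro bexI[of _ id_mat]) (auto simp: mod_vec_id intro: E_group.E_id)
next
  case (st_step x y p q z a)
  then obtain E where E: "E \<in> E_group n" "\<forall>j<n. mod_vec_mat scale n x E j = y j" by blast
  show ?case
    by (intro bexI[of _ "mat_mult n E (elem_mat p q a)"])
       (use st_step E in \<open>auto simp: mod_vec_elem intro: E_group.E_step\<close>)
qed

lemma st_emb:
  assumes "E \<in> E_group n'" "off + n' \<le> n"
  shows "est scale n t (\<lambda>j. if off \<le> j \<and> j < off + n' then mod_vec_mat scale n' (\<lambda>i. t (off+i)) E (j - off) else t j)"
  using assms
proof (induction rule: E_group.induct)
  case E_id
  then show ?case by (intro st_base) (auto simp: mod_vec_id)
next
  case (E_step A p q a)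
  show ?case
    apply (rule est.st_step[OF E_step.IH[OF E_step.prems], of "off+p" "off+q" _ a])
    using E_step by (auto simp: mod_vec_elem)
qed


lemma span_image_sum:
  fixes m :: "nat \<Rightarrow> 'b" and n :: nat
  assumes "x \<in> span (m ` {..<n})"
  shows "\<exists>c. x = (\<Sum>i<n. c i *s m i)"
  using assms
proof (induction rule: span_induct)
  case base
  show ?case unfolding subspace_def
  proof (intro conjI allI impI ballI)
    show "0 \<in> Collect (\<lambda>x. \<exists>c. x = (\<Sum>i<n. c i *s m i))"
      by (auto intro!: exI[of _ "\<lambda>i. 0"])
  next
    fix x y assume "x \<in> Collect (\<lambda>x. \<exists>c. x = (\<Sum>i<n. c i *s m i))" "y \<in> Collect (\<lambda>x. \<exists>c. x = (\<Sum>i<n. c i *s m i))"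
    then obtain c c' where "x = (\<Sum>i<n. c i *s m i)" "y = (\<Sum>i<n. c' i *s m i)" by auto
    then show "x + y \<in> Collect (\<lambda>x. \<exists>c. x = (\<Sum>i<n. c i *s m i))"
      by (auto intro!: exI[of _ "\<lambda>i. c i + c' i"] simp: scale_left_distrib sum.distrib)
  next
    fix a x assume "x \<in> Collect (\<lambda>x. \<exists>c. x = (\<Sum>i<n. c i *s m i))"
    then obtain c where "x = (\<Sum>i<n. c i *s m i)" by auto
    then show "a *s x \<in> Collect (\<lambda>x. \<exists>c. x = (\<Sum>i<n. c i *s m i))"
      by (auto intro!: exI[of _ "\<lambda>i. a * c i"] simp: scale_sum_right)
  qed
next
  case (step x)
  then obtain j where j: "j < n" "x = m j" by auto
  have "(\<Sum>i<n. (if i = j then 1 else 0) *s m i) = (\<Sum>i<n. if i = j then m i else 0)"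
    by (rule sum.cong) auto
  also have "\<dots> = m j" using j(1) by simp
  finally show ?case using j(2) by metis
qed

lemma add_comb:
  assumes "finite S" "S \<subseteq> {..<n} - {q}" "q < n"
  shows "est scale n x (x(q := x q + (\<Sum>i\<in>S. c i *s x i)))"
  using assms
proof (induction S rule: finite_induct)
  case empty
  then show ?case by (simp add: st_refl)
next
  case (insert i S)
  have IH: "est scale n x (x(q := x q + (\<Sum>i\<in>S. c i *s x i)))"
    by (rule insert.IH) (use insert.prems in auto)
  have eq: "\<forall>j<n. (x(q := x q + (\<Sum>i\<in>insert i S. c i *s x i))) j = (if j = q then (x(q := x q + (\<Sum>i\<in>S. c i *s x i))) q + c i *s (x(q := x q + (\<Sum>i\<in>S. c i *s x i))) i else (x(q := x q + (\<Sum>i\<in>S. c i *s x i))) j)"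
    using insert by (auto simp: add_ac)
  have c: "i < n" "i \<noteq> q" using insert.prems by auto
  show ?case by (rule est.st_step[OF IH c(1) insert.prems(2) c(2) eq])
qed

lemma add_src:
  assumes "finite S" "S \<subseteq> {..<n} - {q}" "q < n"
  shows "est scale n x (\<lambda>j. if j \<in> S then x j + c j *s x q else x j)"
  using assms
proof (induction S rule: finite_induct)
  case empty
  then show ?case by (simp add: st_refl)
next
  case (insert i S)
  have IH: "est scale n x (\<lambda>j. if j \<in> S then x j + c j *s x q else x j)"
    by (rule insert.IH) (use insert.prems in auto)
  show ?case
    by (rule est.st_step[OF IH, of q i _ "c i"]) (use insert in auto)
qed

lemma st_unim:
  assumes "est scale n x y" "span (x ` {..<n} \<union> N) = UNIV"
  shows "span (y ` {..<n} \<union> N) = UNIV"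
proof -
  have "x ` {..<n} \<union> N \<subseteq> span (y ` {..<n} \<union> N)"
  proof
    fix v assume "v \<in> x ` {..<n} \<union> N"
    then show "v \<in> span (y ` {..<n} \<union> N)"
    proof
      assume "v \<in> x ` {..<n}"
      then obtain j where "j < n" "v = x j" by auto
      then have "v \<in> span (y ` {..<n})" using st_span[OF st_sym[OF assms(1)]] by auto
      then show ?thesis using span_mono[of "y ` {..<n}" "y ` {..<n} \<union> N"] by auto
    next
      assume "v \<in> N"
      then show ?thesis by (simp add: span_base)
    qed
  qed
  then have "span (x ` {..<n} \<union> N) \<subseteq> span (y ` {..<n} \<union> N)"
    by (rule span_minimal) simp
  with assms(2) show ?thesis by auto
qed

lemma main:
  fixes g :: "nat \<Rightarrow> 'b" and n :: nat and m :: "nat \<Rightarrow> 'b"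
  assumes QE: "quasi_euclidean TYPE('a)"
  shows "k < n \<Longrightarrow> subspace N \<Longrightarrow> span (g ` {..<k} \<union> N) = UNIV \<Longrightarrow> span (m ` {..<n} \<union> N) = UNIV
    \<Longrightarrow> \<exists>m'. est scale n m m' \<and> (\<forall>j<n. m' j - (if j < k then g j else 0) \<in> N)"
proof (induction k arbitrary: N m)
  case 0
  have sN: "span N = N" using 0(2) by simp
  have "span N = UNIV" using 0(3) by simp
  then have "N = UNIV" using sN by (simp only:)
  then show ?case using st_refl by blast
next
  case (Suc k)
  define h where "h = g k"
  define N' where "N' = span (insert h N)"
  have spanN: "span N = N" using Suc.prems(2) by simp
  have sN': "subspace N'" unfolding N'_def by simp
  have NN': "N \<subseteq> N'" unfolding N'_def using span_superset by blast
  have hN': "h \<in> N'" unfolding N'_def by (simp add: span_base)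
  have gen': "span (g ` {..<k} \<union> N') = UNIV"
  proof -
    have "g ` {..<Suc k} \<union> N \<subseteq> span (g ` {..<k} \<union> N')"
      using NN' hN' by (auto simp: h_def lessThan_Suc intro: span_base)
    hence "span (g ` {..<Suc k} \<union> N) \<subseteq> span (g ` {..<k} \<union> N')" by (rule span_minimal) simp
    thus ?thesis using Suc.prems(3) by auto
  qed
  have unim': "span (m ` {..<n} \<union> N') = UNIV"
    using Suc.prems(4) span_mono[of "m ` {..<n} \<union> N" "m ` {..<n} \<union> N'"] NN' by auto
  obtain m1 where m1: "est scale n m m1" "\<forall>j<n. m1 j - (if j<k then g j else 0) \<in> N'"
    using Suc.IH[OF _ sN' gen' unim'] Suc.prems(1) by auto
  define s where "s j = (if j<k then g j else (0::'b))" for j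
  have "\<forall>j. \<exists>c. j < n \<longrightarrow> m1 j - s j - c *s h \<in> N"
  proof
    fix j
    show "\<exists>c. j < n \<longrightarrow> m1 j - s j - c *s h \<in> N"
    proof (cases "j < n")
      case True
      then have "m1 j - s j \<in> span (insert h N)" using m1(2) unfolding s_def N'_def by auto
      then show ?thesis using span_breakdown_eq spanN by auto
    qed auto
  qed
  then obtain r where r: "\<And>j. j < n \<Longrightarrow> m1 j - s j - r j *s h \<in> N" by metis
  have unim1: "span (m1 ` {..<n} \<union> N) = UNIV" by (rule st_unim[OF m1(1) Suc.prems(4)])
  have n2: "2 \<le> n - k" using Suc.prems(1) by simp
  obtain E d where E: "E \<in> E_group (n-k)" "\<forall>j<n-k. vec_mat_mult (n-k) (\<lambda>i. r (k+i)) E j = (if j = 0 then d else 0)"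
    using QE n2 unfolding quasi_euclidean_def by blast
  define m2 where "m2 = (\<lambda>j. if k \<le> j \<and> j < k + (n-k) then mod_vec_mat scale (n-k) (\<lambda>i. m1 (k+i)) E (j - k) else m1 j)"
  have st2: "est scale n m1 m2" unfolding m2_def by (rule st_emb[OF E(1)]) (use Suc.prems(1) in simp)
  have m2a: "m2 j - g j - r j *s h \<in> N" if j: "j < k" for j
    using r[of j] j Suc.prems(1) unfolding m2_def s_def by auto
  have m2b: "m2 j - (if j = k then d else 0) *s h \<in> N" if j: "k \<le> j" "j < n" for j
  proof -
    have e1: "m2 j = (\<Sum>i<n-k. E i (j-k) *s m1 (k+i))" unfolding m2_def mod_vec_mat_def using j by simp
    have vm: "(\<Sum>i<n-k. r (k+i) * E i (j-k)) = (if j = k then d else 0)"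
      using E(2)[rule_format, of "j-k"] j unfolding vec_mat_mult_def by auto
    have "(\<Sum>i<n-k. E i (j-k) *s (m1 (k+i) - s (k+i) - r (k+i) *s h))
       = (\<Sum>i<n-k. E i (j-k) *s m1 (k+i)) - (\<Sum>i<n-k. r (k+i) * E i (j-k)) *s h"
      by (simp add: s_def scale_right_diff_distrib sum_subtractf scale_sum_left mult.commute)
    also have "\<dots> = m2 j - (if j = k then d else 0) *s h" using e1 vm by simp
    finally have eq: "m2 j - (if j = k then d else 0) *s h = (\<Sum>i<n-k. E i (j-k) *s (m1 (k+i) - s (k+i) - r (k+i) *s h))" ..
    show ?thesis unfolding eq
      by (rule subspace_sum[OF Suc.prems(2)], rule subspace_scale[OF Suc.prems(2)], rule r) auto
  qed
  have stm2: "est scale n m m2" using st_trans[OF st2 m1(1)] .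
  have unim2: "span (m2 ` {..<n} \<union> N) = UNIV" by (rule st_unim[OF stm2 Suc.prems(4)])
  define w where "w = Suc k"
  have wn: "w < n" using Suc.prems(1) w_def by simp
  have "h \<in> span (m2 ` {..<n} \<union> N)" using unim2 by simp
  then obtain x y where xy: "h = x + y" "x \<in> span (m2 ` {..<n})" "y \<in> N"
    using span_Un[of "m2 ` {..<n}" N] spanN by auto
  obtain c where c: "x = (\<Sum>i<n. c i *s m2 i)" using span_image_sum[OF xy(2)] by blast
  define m3 where "m3 = m2(w := m2 w + (\<Sum>i\<in>{..<n}-{w}. c i *s m2 i))"
  have st3: "est scale n m2 m3" unfolding m3_def by (rule add_comb) (use wn in auto)
  have m2w: "m2 w \<in> N" using m2b[of w] wn unfolding w_def by simp
  have m3w: "m3 w - h \<in> N"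
  proof -
    have "(\<Sum>i<n. c i *s m2 i) = c w *s m2 w + (\<Sum>i\<in>{..<n}-{w}. c i *s m2 i)"
      by (rule sum.remove) (use wn in auto)
    then have "m3 w - h = (m2 w - c w *s m2 w) - y" by (simp add: m3_def xy c algebra_simps)
    then show ?thesis using m2w xy(3) Suc.prems(2)
      by (simp add: subspace_diff subspace_scale)
  qed
  define cc where "cc j = (if j < k then - r j else 1 - d)" for j
  define m4 where "m4 = (\<lambda>j. if j \<in> {..k} then m3 j + cc j *s m3 w else m3 j)"
  have st4: "est scale n m3 m4" unfolding m4_def by (rule add_src) (use wn w_def in auto)
  define m5 where "m5 = m4(w := m4 w + (-1) *s m4 k)"
  have st5: "est scale n m4 m5"
    by (rule est.st_step[of scale n m4 m4 k w m5 "-1", OF st_refl]) (use wn w_def m5_def in auto)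
  have stm5: "est scale n m m5" using st_trans[OF st5 st_trans[OF st4 st_trans[OF st3 stm2]]] .
  have wk: "w \<noteq> k" "k < w" using w_def by auto
  have m5k: "m5 k - h \<in> N"
  proof -
    have "m5 k - h = (m2 k - d *s h) + (1 - d) *s (m3 w - h)"
      using wk by (simp add: m5_def m4_def m3_def cc_def algebra_simps)
    then show ?thesis using m2b[of k] Suc.prems(1,2) m3w
      by (simp add: subspace_add subspace_scale)
  qed
  have fin: "m5 j - (if j < Suc k then g j else 0) \<in> N" if j: "j < n" for j
  proof -
    consider "j < k" | "j = k" | "j = w" | "w < j" using w_def by linarith
    then show ?thesis
    proof cases
      case 1
      then have eq: "m5 j - g j = (m2 j - g j - r j *s h) - r j *s (m3 w - h)"
        using wk by (simp add: m5_def m4_def m3_def cc_def algebra_simps)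
      have "m5 j - g j \<in> N" unfolding eq
        by (rule subspace_diff[OF Suc.prems(2) m2a[OF 1]], rule subspace_scale[OF Suc.prems(2) m3w])
      then show ?thesis using 1 by simp
    next
      case 2
      then show ?thesis using m5k h_def by simp
    next
      case 3
      then have eq: "m5 j - 0 = (m3 w - h) - (m5 k - h)"
        using wk by (simp add: m5_def m4_def algebra_simps)
      have "m5 j - 0 \<in> N" unfolding eq by (rule subspace_diff[OF Suc.prems(2) m3w m5k])
      then show ?thesis using 3 w_def by simp
    next
      case 4
      then have "m5 j = m2 j" using wk by (simp add: m5_def m4_def m3_def)
      then show ?thesis using 4 m2b[of j] j w_def by simp
    qed
  qed
  show ?case using stm5 fin by blast
qed

end

theorem corollaryB:
  fixes scale :: "'r::comm_ring_1 \<Rightarrow> 'm::ab_group_add \<Rightarrow> 'm"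
    and n :: nat
  assumes "module scale"
    and "noetherian_ring TYPE('r)"
    and "quasi_euclidean TYPE('r)"
    and "fin_gen_module scale"
    and "n > module_rank scale"
  shows "\<forall>m \<in> Um scale n. \<forall>m' \<in> Um scale n. \<exists>E \<in> E_group n.
           \<forall>j<n. mod_vec_mat scale n m E j = m' j"
proof -
  interpret module scale by (rule assms(1))
  define k where "k = module_rank scale"
  have ex: "\<exists>k S. finite S \<and> card S = k \<and> module.span scale S = UNIV"
    using assms(4) unfolding fin_gen_module_def by blast
  obtain S where S: "finite S" "card S = k" "module.span scale S = UNIV"
    using LeastI_ex[OF ex] unfolding k_def module_rank_def by blast
  obtain g where g: "bij_betw g {0..<card S} S" using ex_bij_betw_nat_finite[OF S(1)] by blast
  have gS: "g ` {..<k} = S" using bij_betw_imp_surj_on[OF g] S(2) by (simp add: atLeast0LessThan)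
  have kn: "k < n" using assms(5) k_def by simp
  have gen: "module.span scale (g ` {..<k} \<union> {0}) = UNIV"
    using span_mono[of "g ` {..<k}" "g ` {..<k} \<union> {0}"] gS S(3) by auto
  have red: "\<exists>m1. est scale n m m1 \<and> (\<forall>j<n. m1 j = (if j < k then g j else 0))"
    if "m \<in> Um scale n" for m
  proof -
    have "module.span scale (m ` {..<n} \<union> {0}) = UNIV"
      using that span_mono[of "m ` {..<n}" "m ` {..<n} \<union> {0}"] unfolding Um_def by auto
    then obtain m1 where "est scale n m m1" "\<forall>j<n. m1 j - (if j < k then g j else 0) \<in> {0}"
      using main[OF assms(3) kn subspace_single_0 gen] by blast
    then show ?thesis by auto
  qed
  show ?thesis
  proof (intro ballI)
    fix m m' assume m: "m \<in> Um scale n" and m': "m' \<in> Um scale n"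
    obtain m1 where m1: "est scale n m m1" "\<forall>j<n. m1 j = (if j < k then g j else 0)"
      using red[OF m] by blast
    obtain m2 where m2: "est scale n m' m2" "\<forall>j<n. m2 j = (if j < k then g j else 0)"
      using red[OF m'] by blast
    have "est scale n m1 m2" by (rule est.st_base) (use m1 m2 in auto)
    then have "est scale n m m'" using st_trans st_sym[OF m2(1)] m1(1) by blast
    then show "\<exists>E \<in> E_group n. \<forall>j<n. mod_vec_mat scale n m E j = m' j" by (rule st_reach)
  qed
qed

end
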